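(* Let $(\mathcal{X},\rho,\nu)$ be a metric measure space, where $\rho$ is a separable metric and $\nu$ is a finite Borel measure. Let $c:\mathcal{X}\to\mathcal{Y}$ be a concept whose set of boundary points $\partial\mathcal{X}$ is essentially countable (i.e. $\partial\mathcal{X}$ is the union of a countable set and a $\nu$-null set). Then, in the smoothed online classification protocol against any $\nu$-dominated adversary, the 1-nearest neighbor rule satisfies $$\lim_{T\to\infty}\frac1T\sum_{t=1}^T\ell(x_t,y_t,\hat y_t)=0\quad\text{almost surely}.$$
   Context: The loss $\ell(x,y,\hat y)$ is a non-negative, bounded loss function with $\ell(x,y,y)=0$. Smoothed online classification protocol: the learner fixes a prediction strategy; the adversary, knowing it, fixes a concept $c:\mathcal{X}\to\mathcal{Y}$; at each time $t=1,2,\dots$ the adversary selects a probability distribution $\mu_t$ on $\mathcal{X}$ (possibly depending on the history) and draws $x_t\sim\mu_t$; the learner predicts $\hat y_t$ from $x_t$ and past data; it incurs loss $\ell(x_t,y_t,\hat y_t)$ where $y_t=c(x_t)$, and $(x_t,y_t,\hat y_t)$ is revealed to both. The 1-nearest neighbor rule predicts $\hat y_t=y_{\mathrm{NN}_t}$ with $\mathrm{NN}_t\in\arg\min_{\tau<t}\rho(x_t,x_\tau)$ (ties broken arbitrarily; prediction at $t=1$ arbitrary). A measure $\nu$ uniformly dominates a family $\mathcal{M}$ of probability distributions if for every $\epsilon>0$ there is $\delta>0$ with $\nu(A)<\delta\Rightarrow\mu(A)<\epsilon$ for all measurable $A$ and all $\mu\in\mathcal{M}$; an adversary is $\nu$-dominated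 if at all times it selects $\mu_t$ from a fixed family uniformly dominated by $\nu$. The margin of $x$ is $m_c(x)=\inf_{x':c(x')\neq c(x)}\rho(x,x')$, and $\partial\mathcal{X}=\{x:m_c(x)=0\}$ is the set of boundary points. *)

theory Defs
  imports "HOL-Probability.Probability"
begin

text \<open>Margin of a point x with respect to a concept c (infimum over the empty set is +infinity).\<close>
definition margin :: "('a::metric_space \<Rightarrow> 'b) \<Rightarrow> 'a \<Rightarrow> ereal" where
  "margin c x = (INF x'\<in>{x'. c x' \<noteq> c x}. ereal (dist x x'))"

definition boundary :: "('a::metric_space \<Rightarrow> 'b) \<Rightarrow> 'a set" where
  "boundary c = {x. margin c x = 0}"

definition ess_countable :: "'a measure \<Rightarrow> 'a set \<Rightarrow> bool" where
  "ess_countable nu S \<longleftrightarrow> (\<exists>C N. countable C \<and> N \<in> null_sets nu \<and> S = C \<union> N)"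

definition unif_dominates :: "'a measure \<Rightarrow> 'a measure set \<Rightarrow> bool" where
  "unif_dominates nu Mf \<longleftrightarrow>
     (\<forall>\<epsilon>>0. \<exists>\<delta>>0. \<forall>A\<in>sets nu. measure nu A < \<delta> \<longrightarrow> (\<forall>m\<in>Mf. measure m A < \<epsilon>))"

definition hist :: "(nat \<Rightarrow> 'w \<Rightarrow> 'a) \<Rightarrow> nat \<Rightarrow> 'w \<Rightarrow> (nat \<Rightarrow> 'a)" where
  "hist X t \<omega> = (\<lambda>i\<in>{..<t}. X i \<omega>)"

end

theory Submission
  imports Defs
begin


lemma tail_small:
  fixes G :: "nat \<Rightarrow> _ set"
  assumes fm: "finite_measure M" and G: "\<And>j. G j \<in> sets M" and eta: "\<eta> > 0"
  shows "\<exists>k. measure M ((\<Union>j. G j) - (\<Union>j<k. G j)) < \<eta>"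
proof -
  interpret finite_measure M by (rule fm)
  define A where "A k = (\<Union>j<k. G j)" for k :: nat
  have Am: "range A \<subseteq> sets M" using G by (auto simp: A_def intro!: sets.finite_UN)
  have inc: "incseq A" unfolding A_def incseq_def by (force)
  have U: "(\<Union>k. A k) = (\<Union>j. G j)" unfolding A_def by auto
  have "(\<lambda>k. measure M (A k)) \<longlonglongrightarrow> measure M (\<Union>j. G j)"
    using finite_Lim_measure_incseq[OF Am inc] U by simp
  then have "\<forall>\<^sub>F k in sequentially. dist (measure M (A k)) (measure M (\<Union>j. G j)) < \<eta>"
    using eta by (simp add: tendsto_iff)
  then obtain k where k: "dist (measure M (A k)) (measure M (\<Union>j. G j)) < \<eta>"
    by (meson eventually_sequentially order_refl)
  have "measure M ((\<Union>j. G j) - A k) = measure M (\<Union>j. G j) - measure M (A k)"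
    by (rule finite_measure_Diff) (use G Am in \<open>auto simp: A_def intro!: sets.countable_UN\<close>)
  with k have "measure M ((\<Union>j. G j) - A k) < \<eta>" by (auto simp: dist_real_def)
  then show ?thesis unfolding A_def by blast
qed

lemma dense_seq: "\<exists>d :: nat \<Rightarrow> 'a::{metric_space,second_countable_topology}. \<forall>X. open X \<longrightarrow> X \<noteq> {} \<longrightarrow> (\<exists>k. d k \<in> X)"
proof -
  have "\<exists>D::'a set. countable D \<and> (\<forall>X. open X \<longrightarrow> X \<noteq> {} \<longrightarrow> (\<exists>d \<in> D. d \<in> X))"
    by (rule countable_dense_exists)
  then obtain D :: "'a set" where D1: "countable D" and D2: "\<forall>X. open X \<longrightarrow> X \<noteq> {} \<longrightarrow> (\<exists>d \<in> D. d \<in> X)"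
    by (elim exE conjE)
  have Dne: "D \<noteq> {}" using D2 by (metis open_UNIV UNIV_not_empty empty_iff)
  have dD: "range (from_nat_into D) = D" using range_from_nat_into[OF Dne D1] .
  show ?thesis
  proof (rule exI[of _ "from_nat_into D"], intro allI impI)
    fix X :: "'a set" assume "open X" "X \<noteq> {}"
    then obtain e where "e \<in> D" "e \<in> X" using D2 by blast
    then show "\<exists>k. from_nat_into D k \<in> X" using dD by (metis rangeE)
  qed
qed
lemma margin_le: "c x' \<noteq> c x \<Longrightarrow> margin c x \<le> ereal (dist x x')"
  unfolding margin_def by (rule INF_lower) auto

lemma margin_nonneg: "0 \<le> margin c x"
  unfolding margin_def by (rule INF_greatest) auto

lemma cover:
  fixes nu :: "'a::{metric_space, second_countable_topology} measure" and c :: "'a \<Rightarrow> 'b"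
  assumes nu_borel: "sets nu = sets borel" and fin: "finite_measure nu"
    and bdry: "ess_countable nu (boundary c)" and dpos: "\<delta> > 0"
  shows "\<exists>(m::nat) Pc. (\<forall>j<m. Pc j \<in> sets borel) \<and>
     (\<forall>j<m. \<forall>x\<in>Pc j. \<forall>x'\<in>Pc j. \<forall>z. dist x z \<le> dist x x' \<longrightarrow> c z = c x) \<and>
     measure nu (UNIV - (\<Union>j<m. Pc j)) < \<delta>"
proof -
  interpret finite_measure nu by (rule fin)
  have sp: "space nu = UNIV" using sets_eq_imp_space_eq[OF nu_borel] by simp
  have sb: "A \<in> sets borel \<Longrightarrow> A \<in> sets nu" for A using nu_borel by simp
  define Ob where "Ob r = (\<Union>x\<in>{x. margin c x > ereal r}. ball x (r/2))" for r :: real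
  have Oopen: "open (Ob r)" for r unfolding Ob_def by auto
  have Oprop: "c z = c y" if "y \<in> Ob r" "dist y z < r/2" for r y z
  proof -
    from that(1) obtain x where x: "margin c x > ereal r" "dist x y < r/2"
      unfolding Ob_def by auto
    have cy: "c y = c x"
    proof (rule ccontr)
      assume "c y \<noteq> c x"
      then have "margin c x \<le> ereal (dist x y)" by (rule margin_le)
      moreover have "dist x y < r" using x(2) zero_le_dist[of x y] by linarith
      then have "ereal (dist x y) < ereal r" by simp
      ultimately have "margin c x < ereal r" by (rule le_less_trans)
      then show False using x(1) by simp
    qed
    have cz: "c z = c x"
    proof (rule ccontr)
      assume "c z \<noteq> c x"
      then have "margin c x \<le> ereal (dist x z)" by (rule margin_le)
      moreover have "dist x z < r" using x(2) that(2) dist_triangle[of x z y] by linarith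
      then have "ereal (dist x z) < ereal r" by simp
      ultimately have "margin c x < ereal r" by (rule le_less_trans)
      then show False using x(1) by simp
    qed
    show ?thesis using cy cz by simp
  qed
  define G where "G j = Ob (1 / (real j + 1))" for j
  have Gm: "G j \<in> sets nu" for j unfolding G_def by (intro sb borel_open Oopen)
  obtain n where n: "measure nu ((\<Union>j. G j) - (\<Union>j<n. G j)) < \<delta>/3"
    using tail_small[of nu G "\<delta>/3"] fin Gm dpos by auto
  define W where "W = (\<Union>j<n. G j)"
  define s0 where "s0 = 1 / (2 * (real n + 1))"
  have s0pos: "s0 > 0" unfolding s0_def by simp
  have Wprop: "c z = c y" if "y \<in> W" "dist y z < s0" for y z
  proof -
    from that(1) have "\<exists>j<n. y \<in> G j" unfolding W_def by blast
    then obtain j where j: "j < n" "y \<in> Ob (1 / (real j + 1))" unfolding G_def by blast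
    have "2*(real j+1) \<le> 2*(real n+1)" using j(1) by simp
    then have "1/(2*(real n+1)) \<le> 1/(2*(real j+1))" 
      by (rule divide_left_mono) auto
    then have "s0 \<le> (1 / (real j + 1)) / 2" unfolding s0_def by (simp add: mult.commute)
    then have "dist y z < (1 / (real j + 1)) / 2" using that(2) by linarith
    then show ?thesis by (rule Oprop[OF j(2)])
  qed
  have Wopen: "open W" unfolding W_def by (rule open_UN) (auto simp: G_def intro: Oopen)
  obtain d :: "nat \<Rightarrow> 'a" where dd: "\<forall>X. open X \<longrightarrow> X \<noteq> {} \<longrightarrow> (\<exists>k. d k \<in> X)"
    using dense_seq by (elim exE)
  define H where "H k = W \<inter> ball (d k) (s0/2)" for k
  have Hm: "H k \<in> sets nu" for k
  proof -
    have "open (H k)" using Wopen by (auto simp: H_def)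
    then show ?thesis by (intro sb borel_open)
  qed
  have HW: "(\<Union>k. H k) = W"
  proof
    show "(\<Union>k. H k) \<subseteq> W" unfolding H_def by auto
    show "W \<subseteq> (\<Union>k. H k)"
    proof
      fix y assume y: "y \<in> W"
      have "open (ball y (s0/2))" "ball y (s0/2) \<noteq> {}" using s0pos by auto
      then obtain k where "d k \<in> ball y (s0/2)" using dd by blast
      then show "y \<in> (\<Union>k. H k)" using y unfolding H_def by (auto simp: dist_commute)
    qed
  qed
  obtain k2 where k2: "measure nu ((\<Union>k. H k) - (\<Union>j<k2. H j)) < \<delta>/3"
    using tail_small[of nu H "\<delta>/3"] fin Hm dpos by auto
  have Hprop: "c z = c x" if "x \<in> H j" "x' \<in> H j" "dist x z \<le> dist x x'" for j x x' z
  proof -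
    have a: "dist (d j) x < s0/2" "dist (d j) x' < s0/2" "x \<in> W" using that(1,2) unfolding H_def by auto
    have "dist x x' \<le> dist x (d j) + dist (d j) x'" by (rule dist_triangle)
    then have "dist x x' < s0" using a by (simp add: dist_commute)
    then have "dist x z < s0" using that(3) by linarith
    then show ?thesis using Wprop[OF a(3)] by blast
  qed
  from bdry obtain C N where CN: "countable C" "N \<in> null_sets nu" "boundary c = C \<union> N"
    unfolding ess_countable_def by blast
  define e where "e = from_nat_into C"
  have Ce: "C \<subseteq> range e" unfolding e_def by (rule subset_range_from_nat_into[OF CN(1)])
  have Em: "{e j} \<in> sets nu" for j by (rule sb) simp
  obtain k1 where k1: "measure nu ((\<Union>j. {e j}) - (\<Union>j<k1. {e j})) < \<delta>/3"
    using tail_small[of nu "\<lambda>j. {e j}" "\<delta>/3"] fin Em dpos by auto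
  define Pc where "Pc j = (if j < k1 then {e j} else H (j - k1))" for j
  define m where "m = k1 + k2"
  have PcB: "\<forall>j<m. Pc j \<in> sets borel"
    using Hm nu_borel unfolding Pc_def by auto
  have PcP: "\<forall>j<m. \<forall>x\<in>Pc j. \<forall>x'\<in>Pc j. \<forall>z. dist x z \<le> dist x x' \<longrightarrow> c z = c x"
  proof (intro allI impI ballI)
    fix j x x' z assume j: "j < m" and xx: "x \<in> Pc j" "x' \<in> Pc j" and dz: "dist x z \<le> dist x x'"
    show "c z = c x"
    proof (cases "j < k1")
      case True
      then have "x = e j" "x' = e j" using xx unfolding Pc_def by auto
      then have "z = x" using dz by simp
      then show ?thesis by simp
    next
      case False
      then have "x \<in> H (j - k1)" "x' \<in> H (j - k1)" using xx unfolding Pc_def by auto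
      then show ?thesis using Hprop dz by blast
    qed
  qed
  have sub: "UNIV - (\<Union>j<m. Pc j) \<subseteq> N \<union> ((\<Union>j. {e j}) - (\<Union>j<k1. {e j}))
     \<union> ((\<Union>j. G j) - W) \<union> ((\<Union>k. H k) - (\<Union>j<k2. H j))"
  proof
    fix x assume x: "x \<in> UNIV - (\<Union>j<m. Pc j)"
    have notF: "x \<notin> (\<Union>j<k1. {e j})"
    proof
      assume "x \<in> (\<Union>j<k1. {e j})"
      then obtain j where "j < k1" "x = e j" by auto
      then have "x \<in> Pc j" "j < m" unfolding Pc_def m_def by auto
      then show False using x by auto
    qed
    have notH: "x \<notin> (\<Union>j<k2. H j)"
    proof
      assume "x \<in> (\<Union>j<k2. H j)"
      then obtain j where "j < k2" "x \<in> H j" by auto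
      then have "x \<in> Pc (k1 + j)" "k1 + j < m" unfolding Pc_def m_def by auto
      then show False using x by auto
    qed
    show "x \<in> N \<union> ((\<Union>j. {e j}) - (\<Union>j<k1. {e j}))
     \<union> ((\<Union>j. G j) - W) \<union> ((\<Union>k. H k) - (\<Union>j<k2. H j))"
    proof (cases "x \<in> boundary c")
      case True
      then show ?thesis using CN(3) Ce notF by auto
    next
      case False
      then have "margin c x \<noteq> 0" unfolding boundary_def by auto
      then have "0 < margin c x" using margin_nonneg[of c x] by auto
      then obtain r where r: "0 < ereal r" "ereal r < margin c x" using ereal_dense2 by blast
      then have "r > 0" by simp
      then obtain j where j: "inverse (real (Suc j)) < r" using reals_Archimedean by blast
      have "ereal (1 / (real j + 1)) < margin c x"
      proof -
        have "1 / (real j + 1) < r" using j by (simp add: inverse_eq_divide add.commute)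
        then have "ereal (1 / (real j + 1)) < ereal r" by simp
        then show ?thesis using r(2) by (rule less_trans)
      qed
      then have xm: "x \<in> {x. margin c x > ereal (1 / (real j + 1))}" by simp
      have "0 < (1 / (real j + 1))/2" by simp
      then have xb: "x \<in> ball x ((1 / (real j + 1))/2)" by simp
      have "x \<in> G j" unfolding G_def Ob_def by (rule UN_I[where B="\<lambda>x. ball x ((1 / (real j + 1))/2)", OF xm xb])
      then have xG: "x \<in> (\<Union>j. G j)" by (rule UN_I[OF UNIV_I])
      show ?thesis
      proof (cases "x \<in> W")
        case True
        then have "x \<in> (\<Union>k. H k)" using HW by simp
        then have "x \<in> (\<Union>k. H k) - (\<Union>j<k2. H j)" using notH by (rule DiffI)
        then show ?thesis by (rule UnI2)
      next
        case False
        then have "x \<in> (\<Union>j. G j) - W" using xG by (intro DiffI)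
        then show ?thesis by (intro UnI1 UnI2)
      qed
    qed
  qed
  have ms: "N \<in> sets nu" "(\<Union>j. {e j}) - (\<Union>j<k1. {e j}) \<in> sets nu"
     "(\<Union>j. G j) - W \<in> sets nu" "(\<Union>k. H k) - (\<Union>j<k2. H j) \<in> sets nu"
  proof -
    show "N \<in> sets nu" using CN(2) by (rule null_setsD2)
    have "(\<Union>j. {e j}) \<in> sets nu" by (rule sets.countable_UN) (use Em in auto)
    moreover have "(\<Union>j<k1. {e j}) \<in> sets nu" by (rule sets.finite_UN) (use Em in auto)
    ultimately show "(\<Union>j. {e j}) - (\<Union>j<k1. {e j}) \<in> sets nu" by (rule sets.Diff)
    have "(\<Union>j. G j) \<in> sets nu" by (rule sets.countable_UN) (use Gm in auto)
    moreover have "W \<in> sets nu" unfolding W_def by (rule sets.finite_UN) (use Gm in auto)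
    ultimately show "(\<Union>j. G j) - W \<in> sets nu" by (rule sets.Diff)
    have "(\<Union>j. H j) \<in> sets nu" by (rule sets.countable_UN) (use Hm in auto)
    moreover have "(\<Union>j<k2. H j) \<in> sets nu" by (rule sets.finite_UN) (use Hm in auto)
    ultimately show "(\<Union>j. H j) - (\<Union>j<k2. H j) \<in> sets nu" by (rule sets.Diff)
  qed
  define E1 where "E1 = (\<Union>j. {e j}) - (\<Union>j<k1. {e j})"
  define E2 where "E2 = (\<Union>j. G j) - W"
  define E3 where "E3 = (\<Union>k. H k) - (\<Union>j<k2. H j)"
  have msE1: "N \<in> sets nu" by (rule ms(1))
  have msE2: "E1 \<in> sets nu" unfolding E1_def by (rule ms(2))
  have msE3: "E2 \<in> sets nu" unfolding E2_def by (rule ms(3))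
  have msE4: "E3 \<in> sets nu" unfolding E3_def by (rule ms(4))
  note msE = msE1 msE2 msE3 msE4
  have sub': "UNIV - (\<Union>j<m. Pc j) \<subseteq> N \<union> E1 \<union> E2 \<union> E3"
    using sub unfolding E1_def E2_def E3_def .
  have u1: "N \<union> E1 \<in> sets nu" using msE by (intro sets.Un)
  have u2: "N \<union> E1 \<union> E2 \<in> sets nu" using u1 msE by (intro sets.Un)
  have u3: "N \<union> E1 \<union> E2 \<union> E3 \<in> sets nu" using u2 msE by (intro sets.Un)
  have m1: "measure nu (UNIV - (\<Union>j<m. Pc j)) \<le> measure nu (N \<union> E1 \<union> E2 \<union> E3)"
    by (rule finite_measure_mono[OF sub' u3])
  have m2: "measure nu (N \<union> E1 \<union> E2 \<union> E3) \<le> measure nu (N \<union> E1 \<union> E2) + measure nu E3"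
    by (rule measure_Un_le[OF u2 msE(4)])
  have m3: "measure nu (N \<union> E1 \<union> E2) \<le> measure nu (N \<union> E1) + measure nu E2"
    by (rule measure_Un_le[OF u1 msE(3)])
  have m4: "measure nu (N \<union> E1) \<le> measure nu N + measure nu E1"
    by (rule measure_Un_le[OF msE(1) msE(2)])
  have m5: "measure nu N = 0" using measure_Un_null_set[OF sets.empty_sets CN(2)] by simp
  have k1': "measure nu E1 < \<delta>/3" using k1 unfolding E1_def .
  have n': "measure nu E2 < \<delta>/3" using n unfolding E2_def W_def .
  have k2': "measure nu E3 < \<delta>/3" using k2 unfolding E3_def .
  have "measure nu (UNIV - (\<Union>j<m. Pc j)) < \<delta>"
    using m1 m2 m3 m4 m5 k1' n' k2' by linarith
  with PcB PcP have "(\<forall>j<m. Pc j \<in> sets borel) \<and>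
     (\<forall>j<m. \<forall>x\<in>Pc j. \<forall>x'\<in>Pc j. \<forall>z. dist x z \<le> dist x x' \<longrightarrow> c z = c x) \<and>
     measure nu (UNIV - (\<Union>j<m. Pc j)) < \<delta>" by (intro conjI)
  then show ?thesis by (intro exI)
qed



lemma count_bound:
  fixes x :: "nat \<Rightarrow> 'a::metric_space" and c :: "'a \<Rightarrow> 'b" and nn :: "nat \<Rightarrow> nat"
    and loss :: "'a \<Rightarrow> 'b \<Rightarrow> 'b \<Rightarrow> real"
  assumes lnn: "\<And>x y y'. 0 \<le> loss x y y'" and lB: "\<And>x y y'. loss x y y' \<le> B"
    and lz: "\<And>x y. loss x y y = 0"
    and nn_min: "\<And>t \<tau>. 0 < t \<Longrightarrow> \<tau> < t \<Longrightarrow> dist (x t) (x (nn t)) \<le> dist (x t) (x \<tau>)"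
    and Pc: "\<forall>j<m. \<forall>x\<in>Pc j. \<forall>x'\<in>Pc j. \<forall>z. dist x z \<le> dist x x' \<longrightarrow> c z = c x"
  shows "(\<Sum>t<T. loss (x t) (c (x t)) (if t = 0 then y0 else c (x (nn t))))
     \<le> B * (1 + real m + real (card {t. t < T \<and> x t \<notin> (\<Union>j<m. Pc j)}))"
proof -
  define f where "f t = loss (x t) (c (x t)) (if t = 0 then y0 else c (x (nn t)))" for t
  have B0: "0 \<le> B" using lnn[of undefined undefined undefined] lB[of undefined undefined undefined] by linarith
  define Z where "Z = {t. t < T \<and> f t \<noteq> 0}"
  define Bd where "Bd = {t. t < T \<and> x t \<notin> (\<Union>j<m. Pc j)}"
  define Z' where "Z' = {t. t < T \<and> 0 < t \<and> x t \<in> (\<Union>j<m. Pc j) \<and> f t \<noteq> 0}"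
  have finZ: "finite Z" "finite Bd" "finite Z'" unfolding Z_def Bd_def Z'_def by auto
  have "(\<Sum>t<T. f t) = (\<Sum>t\<in>Z. f t)"
    by (rule sum.mono_neutral_right) (auto simp: Z_def)
  also have "\<dots> \<le> (\<Sum>t\<in>Z. B)" by (rule sum_mono) (simp add: f_def lB)
  also have "\<dots> = B * real (card Z)" by simp
  also have "card Z \<le> card ({0} \<union> Bd \<union> Z')"
    by (rule card_mono) (auto simp: Z_def Bd_def Z'_def finZ)
  also have "\<dots> \<le> card ({0::nat} \<union> Bd) + card Z'" by (rule card_Un_le)
  also have "\<dots> \<le> 1 + card Bd + card Z'" using card_Un_le[of "{0::nat}" Bd] by simp
  also have "card Z' \<le> m"
  proof -
    define g where "g t = (LEAST j. j < m \<and> x t \<in> Pc j)" for t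
    have gP: "g t < m \<and> x t \<in> Pc (g t)" if "t \<in> Z'" for t
    proof -
      from that obtain j where "j < m \<and> x t \<in> Pc j" unfolding Z'_def by auto
      then show ?thesis unfolding g_def by (rule LeastI)
    qed
    have key: False if "t1 \<in> Z'" "t2 \<in> Z'" "t1 < t2" "g t1 = g t2" for t1 t2
    proof -
      have "0 < t2" using that unfolding Z'_def by auto
      have d: "dist (x t2) (x (nn t2)) \<le> dist (x t2) (x t1)" using nn_min[OF \<open>0 < t2\<close> that(3)] .
      have "x t1 \<in> Pc (g t2)" "x t2 \<in> Pc (g t2)" "g t2 < m" using gP[OF that(1)] gP[OF that(2)] that(4) by auto
      then have "c (x (nn t2)) = c (x t2)" using Pc d by blast
      then have "f t2 = 0" unfolding f_def using \<open>0 < t2\<close> by (simp add: lz)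
      then show False using that(2) unfolding Z'_def by auto
    qed
    have "inj_on g Z'"
    proof (rule inj_onI)
      fix t1 t2 assume "t1 \<in> Z'" "t2 \<in> Z'" "g t1 = g t2"
      then show "t1 = t2" using key[of t1 t2] key[of t2 t1] by (cases t1 t2 rule: linorder_cases) auto
    qed
    moreover have "g ` Z' \<subseteq> {..<m}" using gP by auto
    ultimately show ?thesis using card_inj_on_le[of g Z' "{..<m}"] by auto
  qed
  finally show ?thesis unfolding f_def[symmetric] Bd_def[symmetric] using B0
    by (simp add: mult_left_mono add_ac)
qed

lemma final_lim:
  fixes a :: "nat \<Rightarrow> real"
  assumes a0: "\<And>T. 0 \<le> a T" and B0: "0 \<le> B"
    and ev: "\<And>n. \<exists>M\<ge>0. eventually (\<lambda>T. a T \<le> B * (M + 3 * real T / (real n + 1))) sequentially"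
  shows "(\<lambda>T. a T / real T) \<longlonglongrightarrow> 0"
proof (rule LIMSEQ_I)
  fix e :: real assume e: "0 < e"
  obtain n :: nat where n: "6 * B / e < real n" using reals_Archimedean2 by blast
  have nB: "3 * B / (real n + 1) < e / 2"
  proof -
    have "6 * B < e * (real n + 1)" using n e by (simp add: field_simps)
    then show ?thesis using e by (simp add: field_simps)
  qed
  obtain M where M: "M \<ge> 0" "eventually (\<lambda>T. a T \<le> B * (M + 3 * real T / (real n + 1))) sequentially"
    using ev by blast
  then obtain N0 where N0: "\<And>T. T \<ge> N0 \<Longrightarrow> a T \<le> B * (M + 3 * real T / (real n + 1))"
    unfolding eventually_sequentially by blast
  obtain N1 :: nat where N1: "2 * B * M / e < real N1" using reals_Archimedean2 by blast
  show "\<exists>N. \<forall>T\<ge>N. norm (a T / real T - 0) < e"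
  proof (intro exI allI impI)
    fix T assume T: "T \<ge> max (max N0 N1) 1"
    then have Tpos: "real T > 0" by simp
    have "a T / real T \<le> B * (M + 3 * real T / (real n + 1)) / real T"
      using N0[of T] T Tpos by (simp add: divide_right_mono)
    also have "\<dots> = B * M / real T + 3 * B / (real n + 1)"
      using Tpos by (simp add: field_simps)
    also have "B * M / real T < e / 2"
    proof -
      have "2 * B * M < e * real N1" using N1 e by (simp add: field_simps)
      also have "\<dots> \<le> e * real T" using T e by simp
      finally show ?thesis using Tpos e by (simp add: field_simps)
    qed
    finally have "a T / real T < e" using nB by simp
    then show "norm (a T / real T - 0) < e" using a0[of T] Tpos by simp
  qed
qed



lemma prob_part:
  fixes P :: "'w measure" and X :: "nat \<Rightarrow> 'w \<Rightarrow> 'a::topological_space"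
    and \<mu> :: "nat \<Rightarrow> (nat \<Rightarrow> 'a) \<Rightarrow> 'a measure"
  assumes P_prob: "prob_space P"
    and X_meas: "\<And>t. X t \<in> measurable P borel"
    and X_law: "\<And>t A H. A \<in> sets borel \<Longrightarrow> H \<in> sets (Pi\<^sub>M {..<t} (\<lambda>_. borel)) \<Longrightarrow>
          measure P {\<omega> \<in> space P. hist X t \<omega> \<in> H \<and> X t \<omega> \<in> A}
            = (\<integral>\<omega>. indicator H (hist X t \<omega>) * measure (\<mu> t (hist X t \<omega>)) A \<partial>P)"
    and adv_meas: "\<And>t A. A \<in> sets borel \<Longrightarrow>
          (\<lambda>h. measure (\<mu> t h) A) \<in> borel_measurable (Pi\<^sub>M {..<t} (\<lambda>_. borel))"
    and Bad: "Bad \<in> sets borel"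
    and hb: "\<And>t h. measure (\<mu> t h) Bad \<le> \<epsilon>" and eps: "0 < \<epsilon>"
  shows "AE \<omega> in P. eventually (\<lambda>T. (\<Sum>t<T. indicator Bad (X t \<omega>)) \<le> 3 * \<epsilon> * real T) sequentially"
proof -
  interpret prob_space P by (rule P_prob)
  have Xm[measurable]: "X t \<in> measurable P borel" for t by (rule X_meas)
  have Bm[measurable]: "Bad \<in> sets borel" by (rule Bad)
  define S where "S T \<omega> = (\<Sum>t<T. indicator Bad (X t \<omega>) :: real)" for T \<omega>
  have Sm[measurable]: "S T \<in> borel_measurable P" for T unfolding S_def by measurable
  have hm[measurable]: "hist X T \<in> measurable P (Pi\<^sub>M {..<T} (\<lambda>_. borel))" for T
    unfolding hist_def by measurable
  define s where "s T h = (\<Sum>t<T. indicator Bad (h t) :: real)" for T and h :: "nat \<Rightarrow> 'a"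
  have sm[measurable]: "s T \<in> borel_measurable (Pi\<^sub>M {..<T} (\<lambda>_. borel))" for T
    unfolding s_def
  proof (intro borel_measurable_sum)
    fix t assume "t \<in> {..<T}"
    then have "(\<lambda>h. h t) \<in> measurable (Pi\<^sub>M {..<T} (\<lambda>_. borel)) borel"
      by (rule measurable_component_singleton)
    then show "(\<lambda>h. indicator Bad (h t) :: real) \<in> borel_measurable (Pi\<^sub>M {..<T} (\<lambda>_. borel))"
      by measurable
  qed
  have sS: "s T (hist X T \<omega>) = S T \<omega>" for T \<omega>
    unfolding s_def S_def hist_def by (rule sum.cong) auto
  have Sk: "\<exists>k\<le>T. S T \<omega> = real k" for T \<omega>
  proof (induction T)
    case 0 then show ?case by (simp add: S_def)
  next
    case (Suc T)
    then obtain k where k: "k \<le> T" "S T \<omega> = real k" by blast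
    have eq: "S (Suc T) \<omega> = S T \<omega> + indicator Bad (X T \<omega>)" by (simp add: S_def)
    show ?case
    proof (cases "X T \<omega> \<in> Bad")
      case True
      then have "S (Suc T) \<omega> = real (Suc k)" using eq k by simp
      then show ?thesis using k by (intro exI[of _ "Suc k"]) auto
    next
      case False
      then have "S (Suc T) \<omega> = real k" using eq k by simp
      then show ?thesis using k by (intro exI[of _ k]) auto
    qed
  qed
  have Sb: "0 \<le> S T \<omega> \<and> S T \<omega> \<le> real T" for T \<omega> using Sk[of T \<omega>] by auto
  define Hk where "Hk T k = {h \<in> space (Pi\<^sub>M {..<T} (\<lambda>_. borel::'a measure)). s T h = real k}" for T k
  have Hkm: "Hk T k \<in> sets (Pi\<^sub>M {..<T} (\<lambda>_. borel))" for T k unfolding Hk_def by measurable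
  define C where "C T k = {\<omega> \<in> space P. S T \<omega> = real k}" for T k
  define A where "A T k = {\<omega> \<in> space P. hist X T \<omega> \<in> Hk T k \<and> X T \<omega> \<in> Bad}" for T k
  have Cm[measurable]: "C T k \<in> sets P" for T k unfolding C_def by measurable
  have Am[measurable]: "A T k \<in> sets P" for T k unfolding A_def using Hkm by measurable
  have hsp: "hist X T \<omega> \<in> space (Pi\<^sub>M {..<T} (\<lambda>_. borel))" if "\<omega> \<in> space P" for T \<omega>
    using measurable_space[OF hm that] .
  have indH: "indicator (Hk T k) (hist X T \<omega>) = (indicator (C T k) \<omega> :: real)" if "\<omega> \<in> space P" for T k \<omega>
    using hsp[OF that] that sS[of T \<omega>] unfolding Hk_def C_def by (auto simp: indicator_def)
  have indA: "indicator (A T k) \<omega> = (indicator (C T k) \<omega> * indicator Bad (X T \<omega>) :: real)"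
    if "\<omega> \<in> space P" for T k \<omega>
    using hsp[OF that] that sS[of T \<omega>] unfolding Hk_def C_def A_def by (auto simp: indicator_def)
  have expdec: "exp (S T \<omega>) = (\<Sum>k\<le>T. exp (real k) * indicator (C T k) \<omega>)" if "\<omega> \<in> space P" for T \<omega>
  proof -
    obtain k0 where k0: "k0 \<le> T" "S T \<omega> = real k0" using Sk by blast
    have "(\<Sum>k\<le>T. exp (real k) * indicator (C T k) \<omega>) = (\<Sum>k\<le>T. if k = k0 then exp (real k0) else 0)"
      by (rule sum.cong) (auto simp: C_def k0(2) that indicator_def)
    also have "\<dots> = exp (real k0)" using k0(1) by simp
    finally show ?thesis using k0(2) by simp
  qed
  have intC: "integrable P (indicator (C T k) :: 'w \<Rightarrow> real)" for T k
    by (rule integrable_const_bound[where B=1]) auto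
  have intExp: "integrable P (\<lambda>\<omega>. exp (S T \<omega>))" for T
    by (rule integrable_const_bound[where B="exp (real T)"]) (auto simp: Sb)
  have intExpB: "integrable P (\<lambda>\<omega>. exp (S T \<omega>) * indicator Bad (X T' \<omega>))" for T T'
    by (rule integrable_const_bound[where B="exp (real T)"]) (auto simp: Sb indicator_def)
  have Phi_eq: "(\<integral>\<omega>. exp (S T \<omega>) \<partial>P) = (\<Sum>k\<le>T. exp (real k) * measure P (C T k))" for T
  proof -
    have "(\<integral>\<omega>. exp (S T \<omega>) \<partial>P) = (\<integral>\<omega>. (\<Sum>k\<le>T. exp (real k) * indicator (C T k) \<omega>) \<partial>P)"
      by (rule Bochner_Integration.integral_cong) (auto simp: expdec)
    also have "\<dots> = (\<Sum>k\<le>T. (\<integral>\<omega>. exp (real k) * indicator (C T k) \<omega> \<partial>P))"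
      by (rule Bochner_Integration.integral_sum) (use intC in auto)
    also have "\<dots> = (\<Sum>k\<le>T. exp (real k) * measure P (C T k))"
      by (rule sum.cong) (auto simp: sets.Int_space_eq2[OF Cm])
    finally show ?thesis .
  qed
  have key: "(\<integral>\<omega>. exp (S T \<omega>) * indicator Bad (X T \<omega>) \<partial>P) \<le> \<epsilon> * (\<integral>\<omega>. exp (S T \<omega>) \<partial>P)" for T
  proof -
    have intA: "integrable P (indicator (A T k) :: 'w \<Rightarrow> real)" for k
      by (rule integrable_const_bound[where B=1]) auto
    have "(\<integral>\<omega>. exp (S T \<omega>) * indicator Bad (X T \<omega>) \<partial>P)
        = (\<integral>\<omega>. (\<Sum>k\<le>T. exp (real k) * indicator (A T k) \<omega>) \<partial>P)"
    proof (rule Bochner_Integration.integral_cong[OF refl])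
      fix \<omega> assume w: "\<omega> \<in> space P"
      show "exp (S T \<omega>) * indicator Bad (X T \<omega>) = (\<Sum>k\<le>T. exp (real k) * indicator (A T k) \<omega>)"
        unfolding expdec[OF w] sum_distrib_right
        by (rule sum.cong[OF refl]) (simp only: indA[OF w] mult.assoc)
    qed
    also have "\<dots> = (\<Sum>k\<le>T. (\<integral>\<omega>. exp (real k) * indicator (A T k) \<omega> \<partial>P))"
      by (rule Bochner_Integration.integral_sum) (use intA in auto)
    also have "\<dots> = (\<Sum>k\<le>T. exp (real k) * measure P (A T k))"
      by (rule sum.cong) (auto simp: sets.Int_space_eq2[OF Am])
    also have "\<dots> \<le> (\<Sum>k\<le>T. exp (real k) * (\<epsilon> * measure P (C T k)))"
    proof (rule sum_mono)
      fix k assume "k \<in> {..T}"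
      have "measure P (A T k) = (\<integral>\<omega>. indicator (Hk T k) (hist X T \<omega>) * measure (\<mu> T (hist X T \<omega>)) Bad \<partial>P)"
        unfolding A_def by (rule X_law[OF Bad Hkm])
      also have "\<dots> \<le> (\<integral>\<omega>. indicator (Hk T k) (hist X T \<omega>) * \<epsilon> \<partial>P)"
      proof (rule Bochner_Integration.integral_mono)
        have mm: "(\<lambda>\<omega>. measure (\<mu> T (hist X T \<omega>)) Bad) \<in> borel_measurable P"
          using measurable_comp[OF hm adv_meas[OF Bad]] by (simp add: comp_def)
        have m1: "(\<lambda>\<omega>. indicator (Hk T k) (hist X T \<omega>) :: real) \<in> borel_measurable P"
          using measurable_comp[OF hm borel_measurable_indicator[OF Hkm]] by (simp add: comp_def)
        have b1: "norm (indicator (Hk T k) (hist X T \<omega>) * measure (\<mu> T (hist X T \<omega>)) Bad) \<le> \<epsilon>" for \<omega>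
          using hb[of T "hist X T \<omega>"] measure_nonneg[of "\<mu> T (hist X T \<omega>)" Bad] eps
          by (auto simp: indicator_def)
        have b2: "norm (indicator (Hk T k) (hist X T \<omega>) * \<epsilon>) \<le> \<epsilon>" for \<omega>
          using eps by (auto simp: indicator_def)
        show "integrable P (\<lambda>\<omega>. indicator (Hk T k) (hist X T \<omega>) * measure (\<mu> T (hist X T \<omega>)) Bad)"
          using m1 mm b1 by (intro integrable_const_bound[where B=\<epsilon>] AE_I2) auto
        show "integrable P (\<lambda>\<omega>. indicator (Hk T k) (hist X T \<omega>) * \<epsilon>)"
          using m1 b2 by (intro integrable_const_bound[where B=\<epsilon>] AE_I2) auto
        show "indicator (Hk T k) (hist X T \<omega>) * measure (\<mu> T (hist X T \<omega>)) Bad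
           \<le> indicator (Hk T k) (hist X T \<omega>) * \<epsilon>" for \<omega>
          using hb by (simp add: indicator_def)
      qed
      also have "\<dots> = (\<integral>\<omega>. indicator (C T k) \<omega> * \<epsilon> \<partial>P)"
        by (rule Bochner_Integration.integral_cong) (auto simp: indH)
      also have "\<dots> = \<epsilon> * measure P (C T k)" by simp
      finally show "exp (real k) * measure P (A T k) \<le> exp (real k) * (\<epsilon> * measure P (C T k))"
        by (simp add: mult_left_mono)
    qed
    also have "\<dots> = \<epsilon> * (\<integral>\<omega>. exp (S T \<omega>) \<partial>P)"
      by (simp add: Phi_eq sum_distrib_left mult_ac)
    finally show ?thesis .
  qed
  define q where "q = 1 + (exp 1 - 1) * \<epsilon>"
  have Phi_bound: "(\<integral>\<omega>. exp (S T \<omega>) \<partial>P) \<le> q ^ T" for T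
  proof (induction T)
    case 0 then show ?case by (simp add: S_def)
  next
    case (Suc T)
    have "(\<integral>\<omega>. exp (S (Suc T) \<omega>) \<partial>P)
        = (\<integral>\<omega>. exp (S T \<omega>) + (exp 1 - 1) * (exp (S T \<omega>) * indicator Bad (X T \<omega>)) \<partial>P)"
      by (rule Bochner_Integration.integral_cong) (auto simp: S_def exp_add indicator_def algebra_simps)
    also have "\<dots> = (\<integral>\<omega>. exp (S T \<omega>) \<partial>P) + (exp 1 - 1) * (\<integral>\<omega>. exp (S T \<omega>) * indicator Bad (X T \<omega>) \<partial>P)"
      using intExp intExpB by simp
    also have "\<dots> \<le> (\<integral>\<omega>. exp (S T \<omega>) \<partial>P) + (exp 1 - 1) * (\<epsilon> * (\<integral>\<omega>. exp (S T \<omega>) \<partial>P))"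
      using key[of T] by (intro add_left_mono mult_left_mono) auto
    also have "\<dots> = q * (\<integral>\<omega>. exp (S T \<omega>) \<partial>P)" by (simp add: q_def algebra_simps)
    also have "\<dots> \<le> q * q ^ T"
      using Suc.IH eps by (intro mult_left_mono) (auto simp: q_def)
    finally show ?case by simp
  qed
  define r where "r = q / exp (3 * \<epsilon>)"
  have q_lt: "q < exp (3 * \<epsilon>)"
  proof -
    have "q \<le> 1 + 2 * \<epsilon>" using exp_le eps unfolding q_def by (intro add_left_mono mult_right_mono) auto
    also have "\<dots> < 1 + 3 * \<epsilon>" using eps by simp
    also have "\<dots> \<le> exp (3 * \<epsilon>)" by (rule exp_ge_add_one_self)
    finally show ?thesis .
  qed
  have q_pos: "0 < q" unfolding q_def using eps by (simp add: add_pos_nonneg)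
  have r01: "0 < r" "r < 1" unfolding r_def using q_lt q_pos by auto
  define E where "E T = {\<omega> \<in> space P. exp (3 * \<epsilon> * real T) \<le> exp (S T \<omega>)}" for T
  have Em[measurable]: "E T \<in> sets P" for T unfolding E_def by measurable
  have Ebound: "measure P (E T) \<le> r ^ T" for T
  proof -
    have "measure P (E T) \<le> (\<integral>\<omega>. exp (S T \<omega>) \<partial>P) / exp (3 * \<epsilon> * real T)"
      unfolding E_def by (rule integral_Markov_inequality_measure[OF intExp sets.top]) auto
    also have "\<dots> \<le> q ^ T / exp (3 * \<epsilon> * real T)"
      by (rule divide_right_mono[OF Phi_bound]) simp
    also have "exp (3 * \<epsilon> * real T) = exp (3 * \<epsilon>) ^ T"
      using exp_of_nat_mult[of T "3 * \<epsilon>"] by (simp add: mult.commute)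
    also have "q ^ T / exp (3 * \<epsilon>) ^ T = r ^ T" unfolding r_def by (simp add: power_divide)
    finally show ?thesis .
  qed
  have summ: "summable (\<lambda>T. measure P (E T))"
    by (rule summable_comparison_test'[OF summable_geometric[of r], where N=0]) (use r01 Ebound in auto)
  have "AE \<omega> in P. eventually (\<lambda>T. \<omega> \<in> space P - E T) sequentially"
    by (rule borel_cantelli_AE1) (use summ in \<open>auto simp: emeasure_eq_measure\<close>)
  then show ?thesis
    by (rule AE_mp) (auto intro!: AE_I2 elim!: eventually_mono simp: E_def S_def not_le)
qed

theorem theorem1:
  fixes nu :: "'a::{metric_space, second_countable_topology} measure"
    and c :: "'a \<Rightarrow> 'b"
    and loss :: "'a \<Rightarrow> 'b \<Rightarrow> 'b \<Rightarrow> real"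
    and Mf :: "'a measure set"
    and \<mu> :: "nat \<Rightarrow> (nat \<Rightarrow> 'a) \<Rightarrow> 'a measure"
    and P :: "'w measure"
    and X :: "nat \<Rightarrow> 'w \<Rightarrow> 'a"
    and nn :: "nat \<Rightarrow> 'w \<Rightarrow> nat"
    and yhat0 :: "'w \<Rightarrow> 'b"
  assumes nu_borel: "sets nu = sets borel"
    and nu_finite: "finite_measure nu"
    and bdry: "ess_countable nu (boundary c)"
    and loss_nonneg: "\<And>x y y'. 0 \<le> loss x y y'"
    and loss_bounded: "\<exists>B. \<forall>x y y'. loss x y y' \<le> B"
    and loss_zero: "\<And>x y. loss x y y = 0"
    and Mf_prob: "\<And>m. m \<in> Mf \<Longrightarrow> prob_space m \<and> sets m = sets borel"
    and dominated: "unif_dominates nu Mf"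
    and adv_in: "\<And>t h. \<mu> t h \<in> Mf"
    and adv_meas: "\<And>t A. A \<in> sets borel \<Longrightarrow>
          (\<lambda>h. measure (\<mu> t h) A) \<in> borel_measurable (Pi\<^sub>M {..<t} (\<lambda>_. borel))"
    and P_prob: "prob_space P"
    and X_meas: "\<And>t. X t \<in> measurable P borel"
    and X_law: "\<And>t A H. A \<in> sets borel \<Longrightarrow> H \<in> sets (Pi\<^sub>M {..<t} (\<lambda>_. borel)) \<Longrightarrow>
          measure P {\<omega> \<in> space P. hist X t \<omega> \<in> H \<and> X t \<omega> \<in> A}
            = (\<integral>\<omega>. indicator H (hist X t \<omega>) * measure (\<mu> t (hist X t \<omega>)) A \<partial>P)"
    and nn_lt: "\<And>t \<omega>. 0 < t \<Longrightarrow> nn t \<omega> < t"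
    and nn_min: "\<And>t \<omega> \<tau>. 0 < t \<Longrightarrow> \<tau> < t \<Longrightarrow>
          dist (X t \<omega>) (X (nn t \<omega>) \<omega>) \<le> dist (X t \<omega>) (X \<tau> \<omega>)"
  shows "AE \<omega> in P.
    (\<lambda>T. (\<Sum>t<T. loss (X t \<omega>) (c (X t \<omega>))
              (if t = 0 then yhat0 \<omega> else c (X (nn t \<omega>) \<omega>))) / real T)
      \<longlonglongrightarrow> 0"
proof -
  obtain B where B: "\<forall>x y y'. loss x y y' \<le> B" using loss_bounded by blast
  have B0: "0 \<le> B" using loss_nonneg[of undefined undefined undefined] B by (meson order_trans)
  define a where "a T \<omega> = (\<Sum>t<T. loss (X t \<omega>) (c (X t \<omega>))
              (if t = 0 then yhat0 \<omega> else c (X (nn t \<omega>) \<omega>)))" for T \<omega>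
  have Qn: "AE \<omega> in P. \<exists>M\<ge>0. eventually (\<lambda>T. a T \<omega> \<le> B * (M + 3 * real T / (real n + 1))) sequentially"
    for n :: nat
  proof -
    define \<epsilon> where "\<epsilon> = 1 / (real n + 1)"
    have eps: "0 < \<epsilon>" unfolding \<epsilon>_def by simp
    obtain \<delta> where dpos: "\<delta> > 0" and dom: "\<forall>A\<in>sets nu. measure nu A < \<delta> \<longrightarrow> (\<forall>m\<in>Mf. measure m A < \<epsilon>)"
      using dominated eps unfolding unif_dominates_def by blast
    obtain m :: nat and Pc where PcB: "\<forall>j<m. Pc j \<in> sets borel"
      and PcP: "\<forall>j<m. \<forall>x\<in>Pc j. \<forall>x'\<in>Pc j. \<forall>z. dist x z \<le> dist x x' \<longrightarrow> c z = c x"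
      and Pcm: "measure nu (UNIV - (\<Union>j<m. Pc j)) < \<delta>"
      using cover[OF nu_borel nu_finite bdry dpos] by (elim exE conjE)
    define U where "U = (\<Union>j<m. Pc j)"
    define Bad where "Bad = UNIV - U"
    have UB: "U \<in> sets borel" unfolding U_def by (rule sets.finite_UN) (use PcB in auto)
    have BadB: "Bad \<in> sets borel" unfolding Bad_def using borel_comp[OF UB] by (simp add: Compl_eq_Diff_UNIV)
    have Badnu: "Bad \<in> sets nu" using BadB nu_borel by simp
    have hb: "measure (\<mu> t h) Bad \<le> \<epsilon>" for t h
      using dom Badnu Pcm adv_in[of t h] unfolding Bad_def U_def by (meson less_imp_le)
    have AEp: "AE \<omega> in P. eventually (\<lambda>T. (\<Sum>t<T. indicator Bad (X t \<omega>)) \<le> 3 * \<epsilon> * real T) sequentially"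
      by (rule prob_part[OF P_prob X_meas X_law adv_meas BadB hb eps])
    have cnt: "a T \<omega> \<le> B * (1 + real m + (\<Sum>t<T. indicator Bad (X t \<omega>)))" for T \<omega>
    proof -
      have "a T \<omega> \<le> B * (1 + real m + real (card {t. t < T \<and> X t \<omega> \<notin> (\<Union>j<m. Pc j)}))"
        unfolding a_def
        by (rule count_bound[where x="\<lambda>t. X t \<omega>" and nn="\<lambda>t. nn t \<omega>", OF loss_nonneg _ loss_zero nn_min PcP])
          (use B in auto)
      also have "real (card {t. t < T \<and> X t \<omega> \<notin> (\<Union>j<m. Pc j)}) = (\<Sum>t<T. indicator Bad (X t \<omega>))"
      proof -
        have "(\<Sum>t<T. indicator Bad (X t \<omega>) :: real) = (\<Sum>t\<in>{..<T}. if X t \<omega> \<in> Bad then 1 else 0)"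
          by (rule sum.cong) (auto simp: indicator_def)
        also have "\<dots> = (\<Sum>t\<in>{t \<in> {..<T}. X t \<omega> \<in> Bad}. 1)"
          by (rule sum.inter_filter[symmetric]) simp
        also have "{t \<in> {..<T}. X t \<omega> \<in> Bad} = {t. t < T \<and> X t \<omega> \<notin> (\<Union>j<m. Pc j)}"
          unfolding Bad_def U_def by auto
        finally show ?thesis by simp
      qed
      finally show ?thesis .
    qed
    show ?thesis
    proof (rule AE_mp[OF AEp], rule AE_I2, intro impI)
      fix \<omega> assume ev: "eventually (\<lambda>T. (\<Sum>t<T. indicator Bad (X t \<omega>)) \<le> 3 * \<epsilon> * real T) sequentially"
      have "eventually (\<lambda>T. a T \<omega> \<le> B * ((1 + real m) + 3 * real T / (real n + 1))) sequentially"
      proof (rule eventually_mono[OF ev])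
        fix T assume h: "(\<Sum>t<T. indicator Bad (X t \<omega>)) \<le> 3 * \<epsilon> * real T"
        have "a T \<omega> \<le> B * (1 + real m + (\<Sum>t<T. indicator Bad (X t \<omega>)))" by (rule cnt)
        also have "\<dots> \<le> B * (1 + real m + 3 * \<epsilon> * real T)"
          using h B0 by (intro mult_left_mono) auto
        also have "3 * \<epsilon> * real T = 3 * real T / (real n + 1)" unfolding \<epsilon>_def by simp
        finally show "a T \<omega> \<le> B * ((1 + real m) + 3 * real T / (real n + 1))" by (simp add: add.assoc)
      qed
      then show "\<exists>M\<ge>0. eventually (\<lambda>T. a T \<omega> \<le> B * (M + 3 * real T / (real n + 1))) sequentially"
        by (intro exI[of _ "1 + real m"]) auto
    qed
  qed
  have "AE \<omega> in P. \<forall>n::nat. \<exists>M\<ge>0. eventually (\<lambda>T. a T \<omega> \<le> B * (M + 3 * real T / (real n + 1))) sequentially"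
    using Qn by (simp add: AE_all_countable)
  then show ?thesis
  proof (rule AE_mp, intro AE_I2 impI)
    fix \<omega> assume h: "\<forall>n::nat. \<exists>M\<ge>0. eventually (\<lambda>T. a T \<omega> \<le> B * (M + 3 * real T / (real n + 1))) sequentially"
    have "(\<lambda>T. a T \<omega> / real T) \<longlonglongrightarrow> 0"
      by (rule final_lim[OF _ B0]) (use h loss_nonneg in \<open>auto simp: a_def intro!: sum_nonneg\<close>)
    then show "(\<lambda>T. (\<Sum>t<T. loss (X t \<omega>) (c (X t \<omega>))
              (if t = 0 then yhat0 \<omega> else c (X (nn t \<omega>) \<omega>))) / real T) \<longlonglongrightarrow> 0"
      unfolding a_def .
  qed
qed

end
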